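(* Let $\mathscr T=(V,\mathcal E)$ be the directed Cartesian product of rooted directed trees $\mathscr T_1,\dots,\mathscr T_d$ and let $S_{\boldsymbol\lambda}=(S_1,\dots,S_d)$ be a commuting toral left invertible multishift on $\mathscr T$ with toral Cauchy dual $S^{\mathfrak t}_{\boldsymbol\lambda}$. Then $S^{\mathfrak t}_{\boldsymbol\lambda}$ is commuting if and only if there exist a toral isometry multishift $U_{\boldsymbol\theta}=(U_1,\dots,U_d)$ on $\mathscr T$ and a commuting $d$-tuple $D=(D_1,\dots,D_d)$ of diagonal, positive, invertible bounded operators on $l^2(V)$ such that $S_j=U_jD_j$ for $j=1,\dots,d$. Further, this decomposition is unique.
   Context: Directed trees: no loops or circuits, connected ignoring orientation, unique parent $\mathsf{par}(v)$ for vertices with incoming edges; rooted: unique parentless vertex $\mathsf{root}$; $\mathsf{Chi}(u)=\{v:(u,v)\in\mathcal E\}$; all leafless. Directed Cartesian product of rooted trees $\mathscr T_j=(V_j,\mathcal E_j)$: $V=V_1\times\dots\times V_d$ (countably infinite), $(v,w)\in\mathcal E$ iff for some $k$, $(v_k,w_k)\in\mathcal E_k$ and $w_j=v_j$ ($j\ne k$). $\mathsf{Chi}_j(v)=\{w:w_j\in\mathsf{Chi}(v_j),w_k=v_k\ (k\ne j)\}$. A multishift on $\mathscr T$ with positive weights $\lambda^{(j)}_v$ ($v\neq\mathsf{root}$) is the tuple $S_je_v=\sum_{w\in\mathsf{Chi}_j(v)}\lambda^{(j)}_we_w$ of bounded operators on $l^2(V)$. Toral left invertible: each $S_j^*S_j$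 invertible; toral Cauchy dual: $S^{\mathfrak t}_j=S_j(S_j^*S_j)^{-1}$. A toral isometry is a commuting tuple with $U_j^*U_j=I$ for all $j$. Diagonal means diagonal with respect to the basis $\{e_v\}_{v\in V}$. *)

theory Defs
  imports "HOL-Analysis.Analysis" "HOL-Library.FuncSet"
begin

definition rooted_directed_tree :: "'a set \<Rightarrow> ('a \<times> 'a) set \<Rightarrow> bool" where
  "rooted_directed_tree V E \<longleftrightarrow>
     E \<subseteq> V \<times> V \<and> V \<noteq> {} \<and>
     (\<forall>u. (u, u) \<notin> E\<^sup>+) \<and>                                   \<comment> \<open>no loops, no circuits\<close>
     (\<forall>u\<in>V. \<forall>v\<in>V. (u, v) \<in> (E \<union> E\<inverse>)\<^sup>*) \<and>            \<comment> \<open>connected ignoring orientation\<close>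
     (\<forall>v. (\<exists>u. (u, v) \<in> E) \<longrightarrow> (\<exists>!u. (u, v) \<in> E)) \<and>  \<comment> \<open>unique parent\<close>
     (\<exists>!r. r \<in> V \<and> \<not> (\<exists>u. (u, r) \<in> E))"

definition leafless :: "'a set \<Rightarrow> ('a \<times> 'a) set \<Rightarrow> bool" where
  "leafless V E \<longleftrightarrow> (\<forall>u\<in>V. \<exists>v. (u, v) \<in> E)"

definition tree_root :: "'a set \<Rightarrow> ('a \<times> 'a) set \<Rightarrow> 'a" where
  "tree_root V E = (THE r. r \<in> V \<and> \<not> (\<exists>u. (u, r) \<in> E))"

definition prod_vertices :: "nat \<Rightarrow> (nat \<Rightarrow> 'a set) \<Rightarrow> (nat \<Rightarrow> 'a) set" where
  "prod_vertices d Vt = PiE {..<d} Vt"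

definition prod_root :: "nat \<Rightarrow> (nat \<Rightarrow> 'a set) \<Rightarrow> (nat \<Rightarrow> ('a \<times> 'a) set) \<Rightarrow> (nat \<Rightarrow> 'a)" where
  "prod_root d Vt Et = restrict (\<lambda>j. tree_root (Vt j) (Et j)) {..<d}"

definition prod_child :: "nat \<Rightarrow> (nat \<Rightarrow> 'a set) \<Rightarrow> (nat \<Rightarrow> ('a \<times> 'a) set) \<Rightarrow> nat
     \<Rightarrow> (nat \<Rightarrow> 'a) \<Rightarrow> (nat \<Rightarrow> 'a) set" where
  "prod_child d Vt Et j v =
     {w \<in> prod_vertices d Vt. (v j, w j) \<in> Et j \<and> (\<forall>k<d. k \<noteq> j \<longrightarrow> w k = v k)}"

definition l2space :: "'v set \<Rightarrow> ('v \<Rightarrow> complex) set" where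
  "l2space V = {f. (\<forall>v. v \<notin> V \<longrightarrow> f v = 0) \<and> (\<lambda>v. (cmod (f v))\<^sup>2) summable_on V}"

definition l2inner :: "'v set \<Rightarrow> ('v \<Rightarrow> complex) \<Rightarrow> ('v \<Rightarrow> complex) \<Rightarrow> complex" where
  "l2inner V f g = infsum (\<lambda>v. cnj (f v) * g v) V"

definition l2norm :: "'v set \<Rightarrow> ('v \<Rightarrow> complex) \<Rightarrow> real" where
  "l2norm V f = sqrt (infsum (\<lambda>v. (cmod (f v))\<^sup>2) V)"

definition basis_vec :: "'v \<Rightarrow> 'v \<Rightarrow> complex" where
  "basis_vec v = (\<lambda>w. if w = v then 1 else 0)"

text \<open>Operators are HOL functions; only their action on l2space V matters.\<close>
definition bounded_op :: "'v set \<Rightarrow> (('v \<Rightarrow> complex) \<Rightarrow> ('v \<Rightarrow> complex)) \<Rightarrow> bool" where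
  "bounded_op V T \<longleftrightarrow>
     (\<forall>f\<in>l2space V. T f \<in> l2space V) \<and>
     (\<forall>f\<in>l2space V. \<forall>g\<in>l2space V. \<forall>a b.
        T (\<lambda>v. a * f v + b * g v) = (\<lambda>v. a * T f v + b * T g v)) \<and>
     (\<exists>C. \<forall>f\<in>l2space V. l2norm V (T f) \<le> C * l2norm V f)"

definition is_adjoint :: "'v set \<Rightarrow> (('v \<Rightarrow> complex) \<Rightarrow> ('v \<Rightarrow> complex))
     \<Rightarrow> (('v \<Rightarrow> complex) \<Rightarrow> ('v \<Rightarrow> complex)) \<Rightarrow> bool" where
  "is_adjoint V A B \<longleftrightarrow> bounded_op V B \<and>
     (\<forall>f\<in>l2space V. \<forall>g\<in>l2space V. l2inner V (B f) g = l2inner V f (A g))"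

definition is_inverse :: "'v set \<Rightarrow> (('v \<Rightarrow> complex) \<Rightarrow> ('v \<Rightarrow> complex))
     \<Rightarrow> (('v \<Rightarrow> complex) \<Rightarrow> ('v \<Rightarrow> complex)) \<Rightarrow> bool" where
  "is_inverse V A B \<longleftrightarrow> bounded_op V B \<and>
     (\<forall>f\<in>l2space V. A (B f) = f \<and> B (A f) = f)"

definition commuting_tuple :: "'v set \<Rightarrow> nat \<Rightarrow> (nat \<Rightarrow> ('v \<Rightarrow> complex) \<Rightarrow> ('v \<Rightarrow> complex)) \<Rightarrow> bool" where
  "commuting_tuple V d T \<longleftrightarrow>
     (\<forall>i<d. \<forall>j<d. \<forall>f\<in>l2space V. T i (T j f) = T j (T i f))"

definition is_multishift :: "nat \<Rightarrow> (nat \<Rightarrow> 'a set) \<Rightarrow> (nat \<Rightarrow> ('a \<times> 'a) set)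
     \<Rightarrow> (nat \<Rightarrow> (nat \<Rightarrow> 'a) \<Rightarrow> real)
     \<Rightarrow> (nat \<Rightarrow> ((nat \<Rightarrow> 'a) \<Rightarrow> complex) \<Rightarrow> ((nat \<Rightarrow> 'a) \<Rightarrow> complex)) \<Rightarrow> bool" where
  "is_multishift d Vt Et lam S \<longleftrightarrow>
     (\<forall>j<d. \<forall>w\<in>prod_vertices d Vt. w \<noteq> prod_root d Vt Et \<longrightarrow> lam j w > 0) \<and>
     (\<forall>j<d. bounded_op (prod_vertices d Vt) (S j) \<and>
        (\<forall>v\<in>prod_vertices d Vt. S j (basis_vec v) =
            (\<lambda>w. if w \<in> prod_child d Vt Et j v then complex_of_real (lam j w) else 0)))"

definition toral_isometry :: "'v set \<Rightarrow> nat \<Rightarrow> (nat \<Rightarrow> ('v \<Rightarrow> complex) \<Rightarrow> ('v \<Rightarrow> complex)) \<Rightarrow> bool" where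
  "toral_isometry V d U \<longleftrightarrow> commuting_tuple V d U \<and>
     (\<forall>j<d. \<exists>Ua. is_adjoint V (U j) Ua \<and> (\<forall>f\<in>l2space V. Ua (U j f) = f))"

definition diag_pos_inv :: "'v set \<Rightarrow> (('v \<Rightarrow> complex) \<Rightarrow> ('v \<Rightarrow> complex)) \<Rightarrow> bool" where
  "diag_pos_inv V D \<longleftrightarrow> bounded_op V D \<and>
     (\<exists>\<delta>. \<forall>v\<in>V. D (basis_vec v) = (\<lambda>w. \<delta> v * basis_vec v w)) \<and>
     (\<forall>f\<in>l2space V. Im (l2inner V f (D f)) = 0 \<and> Re (l2inner V f (D f)) \<ge> 0) \<and>
     (\<exists>Di. is_inverse V D Di)"

definition polar_decomp :: "nat \<Rightarrow> (nat \<Rightarrow> 'a set) \<Rightarrow> (nat \<Rightarrow> ('a \<times> 'a) set)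
     \<Rightarrow> (nat \<Rightarrow> ((nat \<Rightarrow> 'a) \<Rightarrow> complex) \<Rightarrow> ((nat \<Rightarrow> 'a) \<Rightarrow> complex))
     \<Rightarrow> (nat \<Rightarrow> ((nat \<Rightarrow> 'a) \<Rightarrow> complex) \<Rightarrow> ((nat \<Rightarrow> 'a) \<Rightarrow> complex))
     \<Rightarrow> (nat \<Rightarrow> (nat \<Rightarrow> 'a) \<Rightarrow> real)
     \<Rightarrow> (nat \<Rightarrow> ((nat \<Rightarrow> 'a) \<Rightarrow> complex) \<Rightarrow> ((nat \<Rightarrow> 'a) \<Rightarrow> complex)) \<Rightarrow> bool" where
  "polar_decomp d Vt Et S U \<theta> D \<longleftrightarrow>
     is_multishift d Vt Et \<theta> U \<and> toral_isometry (prod_vertices d Vt) d U \<and>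
     commuting_tuple (prod_vertices d Vt) d D \<and>
     (\<forall>j<d. diag_pos_inv (prod_vertices d Vt) (D j)) \<and>
     (\<forall>j<d. \<forall>f\<in>l2space (prod_vertices d Vt). S j f = U j (D j f))"

end

theory Submission
  imports Defs
begin



definition mlt :: "('v \<Rightarrow> real) \<Rightarrow> ('v \<Rightarrow> complex) \<Rightarrow> ('v \<Rightarrow> complex)" where
  "mlt m f = (\<lambda>v. complex_of_real (m v) * f v)"

lemma infsum_of_real_c:
  "infsum (\<lambda>x. complex_of_real (f x)) A = of_real (infsum f A)"
proof (cases "f summable_on A")
  case True
  show ?thesis by (rule infsumI, rule has_sum_of_real, simp add: True)
next
  case False
  have "\<not> (\<lambda>x. complex_of_real (f x)) summable_on A"
  proof
    assume "(\<lambda>x. complex_of_real (f x)) summable_on A"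
    then have "(\<lambda>x. Re (complex_of_real (f x))) summable_on A" by (rule summable_on_Re)
    then show False using False by simp
  qed
  then show ?thesis using False by (simp add: infsum_not_exists)
qed

lemma l2_out: "f \<in> l2space V \<Longrightarrow> v \<notin> V \<Longrightarrow> f v = 0"
  by (simp add: l2space_def)

lemma basis_in_l2: "v \<in> V \<Longrightarrow> basis_vec v \<in> l2space V"
proof -
  assume v: "v \<in> V"
  have "(\<lambda>w. (cmod (basis_vec v w))\<^sup>2) summable_on V"
  proof -
    have "(\<lambda>w. (cmod (basis_vec v w))\<^sup>2) summable_on {v}" by simp
    then show ?thesis
      by (rule summable_on_cong_neutral[THEN iffD1, rotated -1]) (auto simp: basis_vec_def v)
  qed
  then show ?thesis using v by (auto simp: l2space_def basis_vec_def)
qed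

lemma infsum_single:
  assumes "u \<in> V" "\<And>w. w \<in> V \<Longrightarrow> w \<noteq> u \<Longrightarrow> f w = 0"
  shows "infsum f V = (f u :: 'b::{comm_monoid_add,t2_space})"
proof -
  have "infsum f V = infsum f {u}"
    by (rule infsum_cong_neutral) (use assms in auto)
  then show ?thesis by simp
qed

lemma l2inner_basis: "u \<in> V \<Longrightarrow> l2inner V (basis_vec u) h = h u"
  unfolding l2inner_def
  by (subst infsum_single[of u]) (auto simp: basis_vec_def)

lemma l2inner_cnj: "l2inner V f g = cnj (l2inner V g f)"
  unfolding l2inner_def
  by (subst infsum_cnj[symmetric]) (simp add: mult.commute)

lemma l2_zero: "(\<lambda>v. 0) \<in> l2space V"
  by (simp add: l2space_def)

lemma bop_l2: "bounded_op V T \<Longrightarrow> f \<in> l2space V \<Longrightarrow> T f \<in> l2space V"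
  by (simp add: bounded_op_def)

lemma bop_zero: "bounded_op V T \<Longrightarrow> T (\<lambda>v. 0) = (\<lambda>v. 0)"
proof -
  assume T: "bounded_op V T"
  have lin: "\<forall>f\<in>l2space V. \<forall>g\<in>l2space V. \<forall>a b. T (\<lambda>v. a * f v + b * g v) = (\<lambda>v. a * T f v + b * T g v)"
    using T unfolding bounded_op_def by blast
  from lin[rule_format, OF l2_zero l2_zero, of 0 0] show ?thesis by simp
qed

lemma bop_scale: "bounded_op V T \<Longrightarrow> f \<in> l2space V \<Longrightarrow> T (\<lambda>v. c * f v) = (\<lambda>v. c * T f v)"
proof -
  assume T: "bounded_op V T" and f: "f \<in> l2space V"
  have lin: "\<forall>f\<in>l2space V. \<forall>g\<in>l2space V. \<forall>a b. T (\<lambda>v. a * f v + b * g v) = (\<lambda>v. a * T f v + b * T g v)"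
    using T unfolding bounded_op_def by blast
  from lin[rule_format, OF f f, of c 0] show ?thesis by simp
qed

lemma bop_bound: "bounded_op V T \<Longrightarrow> \<exists>C\<ge>0. \<forall>f\<in>l2space V. l2norm V (T f) \<le> C * l2norm V f"
proof -
  assume "bounded_op V T"
  then obtain C where C: "\<forall>f\<in>l2space V. l2norm V (T f) \<le> C * l2norm V f"
    unfolding bounded_op_def by blast
  have n: "l2norm V f \<ge> 0" for f by (simp add: l2norm_def infsum_nonneg)
  show ?thesis
    apply (rule exI[of _ "max C 0"])
  proof (intro conjI ballI)
    fix f assume "f \<in> l2space V"
    then have "l2norm V (T f) \<le> C * l2norm V f" using C by blast
    also have "\<dots> \<le> max C 0 * l2norm V f" using n[of f] by (simp add: mult_right_mono)
    finally show "l2norm V (T f) \<le> max C 0 * l2norm V f" .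
  qed simp
qed

lemma l2norm_nonneg: "l2norm V f \<ge> 0" by (simp add: l2norm_def infsum_nonneg)

lemma abs_le_norm:
  assumes f: "f \<in> l2space V" and u: "u \<in> V"
  shows "cmod (f u) \<le> l2norm V f"
proof -
  have s: "(\<lambda>v. (cmod (f v))\<^sup>2) summable_on V" using f by (simp add: l2space_def)
  have "(cmod (f u))\<^sup>2 = infsum (\<lambda>v. (cmod (f v))\<^sup>2) {u}" by simp
  also have "\<dots> \<le> infsum (\<lambda>v. (cmod (f v))\<^sup>2) V"
    by (rule infsum_mono_neutral) (use s u in auto)
  finally have "sqrt ((cmod (f u))\<^sup>2) \<le> l2norm V f"
    unfolding l2norm_def using real_sqrt_le_mono by blast
  then show ?thesis by simp
qed

lemma l2norm_basis: "v \<in> V \<Longrightarrow> l2norm V (basis_vec v) = 1"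
proof -
  assume v: "v \<in> V"
  have "infsum (\<lambda>w. (cmod (basis_vec v w))\<^sup>2) V = (cmod (basis_vec v v))\<^sup>2"
    by (rule infsum_single[OF v]) (simp add: basis_vec_def)
  then show ?thesis unfolding l2norm_def by (simp add: basis_vec_def)
qed

lemma mlt_l2:
  assumes f: "f \<in> l2space V" and M: "\<And>v. v \<in> V \<Longrightarrow> \<bar>m v\<bar> \<le> M"
  shows "mlt m f \<in> l2space V"
    and "l2norm V (mlt m f) \<le> M * l2norm V f"
proof -
  have s: "(\<lambda>v. (cmod (f v))\<^sup>2) summable_on V" using f by (simp add: l2space_def)
  have M0: "M \<ge> 0" if "V \<noteq> {}" using M that by force
  have le: "(cmod (mlt m f v))\<^sup>2 \<le> M\<^sup>2 * (cmod (f v))\<^sup>2" if "v \<in> V" for v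
  proof -
    have "cmod (mlt m f v) = \<bar>m v\<bar> * cmod (f v)" by (simp add: mlt_def norm_mult)
    also have "\<dots> \<le> M * cmod (f v)" using M[OF that] by (simp add: mult_right_mono)
    finally have "cmod (mlt m f v) \<le> M * cmod (f v)" .
    then have "(cmod (mlt m f v))\<^sup>2 \<le> (M * cmod (f v))\<^sup>2"
      by (simp add: power_mono)
    then show ?thesis by (simp add: power_mult_distrib)
  qed
  have s2: "(\<lambda>v. M\<^sup>2 * (cmod (f v))\<^sup>2) summable_on V" using s by (rule summable_on_cmult_right)
  have s3: "(\<lambda>v. (cmod (mlt m f v))\<^sup>2) summable_on V"
    by (rule summable_on_comparison_test[OF s2]) (use le in auto)
  show "mlt m f \<in> l2space V" using f s3 by (auto simp: l2space_def mlt_def)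
  show "l2norm V (mlt m f) \<le> M * l2norm V f"
  proof (cases "V = {}")
    case True then show ?thesis by (simp add: l2norm_def)
  next
    case False
    have "infsum (\<lambda>v. (cmod (mlt m f v))\<^sup>2) V \<le> infsum (\<lambda>v. M\<^sup>2 * (cmod (f v))\<^sup>2) V"
      by (rule infsum_mono[OF s3 s2]) (use le in auto)
    also have "\<dots> = M\<^sup>2 * infsum (\<lambda>v. (cmod (f v))\<^sup>2) V" by (rule infsum_cmult_right')
    finally have "l2norm V (mlt m f) \<le> sqrt (M\<^sup>2 * infsum (\<lambda>v. (cmod (f v))\<^sup>2) V)"
      unfolding l2norm_def using real_sqrt_le_mono by blast
    also have "\<dots> = M * l2norm V f" using M0[OF False] by (simp add: l2norm_def real_sqrt_mult)
    finally show ?thesis .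
  qed
qed

lemma mlt_bop:
  fixes V :: "'v set" and m :: "'v \<Rightarrow> real"
  assumes M: "\<And>v. v \<in> V \<Longrightarrow> \<bar>m v\<bar> \<le> M"
  shows "bounded_op V (mlt m)"
proof -
  have a: "\<forall>f\<in>l2space V. mlt m f \<in> l2space V"
  proof
    fix f assume "f \<in> l2space V"
    then show "mlt m f \<in> l2space V" by (rule mlt_l2(1)) (rule M)
  qed
  have b: "\<forall>f\<in>l2space V. l2norm V (mlt m f) \<le> M * l2norm V f"
  proof
    fix f assume "f \<in> l2space V"
    then show "l2norm V (mlt m f) \<le> M * l2norm V f" by (rule mlt_l2(2)) (rule M)
  qed
  have c: "mlt m (\<lambda>v. a * f v + b * g v) = (\<lambda>v. a * mlt m f v + b * mlt m g v)" for f g a b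
    unfolding mlt_def by (rule ext) (simp add: ring_distribs)
  show ?thesis unfolding bounded_op_def
    apply (intro conjI)
    using a apply blast
    using c apply blast
    using b by blast
qed

lemma comp_bop:
  assumes A: "bounded_op V A" and B: "bounded_op V B"
  shows "bounded_op V (\<lambda>f. A (B f))"
proof -
  obtain CA where CA: "CA \<ge> 0" "\<forall>f\<in>l2space V. l2norm V (A f) \<le> CA * l2norm V f"
    using bop_bound[OF A] by blast
  obtain CB where CB: "CB \<ge> 0" "\<forall>f\<in>l2space V. l2norm V (B f) \<le> CB * l2norm V f"
    using bop_bound[OF B] by blast
  have l2: "\<forall>f\<in>l2space V. A (B f) \<in> l2space V" using A B by (simp add: bounded_op_def)
  have lin: "\<forall>f\<in>l2space V. \<forall>g\<in>l2space V. \<forall>a b.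
        A (B (\<lambda>v. a * f v + b * g v)) = (\<lambda>v. a * A (B f) v + b * A (B g) v)"
    using A B unfolding bounded_op_def by simp
  have bd: "\<forall>f\<in>l2space V. l2norm V (A (B f)) \<le> (CA * CB) * l2norm V f"
  proof
    fix f assume f: "f \<in> l2space V"
    have "l2norm V (A (B f)) \<le> CA * l2norm V (B f)" using CA f B by (simp add: bounded_op_def)
    also have "\<dots> \<le> CA * (CB * l2norm V f)" using CB f CA(1) by (simp add: mult_left_mono)
    finally show "l2norm V (A (B f)) \<le> (CA * CB) * l2norm V f" by simp
  qed
  show ?thesis unfolding bounded_op_def using l2 lin bd by blast
qed





locale msetup =
  fixes d :: nat and Vt :: "nat \<Rightarrow> 'a set" and Et :: "nat \<Rightarrow> ('a \<times> 'a) set"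
    and lam :: "nat \<Rightarrow> (nat \<Rightarrow> 'a) \<Rightarrow> real"
    and S Sa Inv :: "nat \<Rightarrow> ((nat \<Rightarrow> 'a) \<Rightarrow> complex) \<Rightarrow> ((nat \<Rightarrow> 'a) \<Rightarrow> complex)"
  assumes trees: "\<forall>j<d. rooted_directed_tree (Vt j) (Et j) \<and> leafless (Vt j) (Et j) \<and> countable (Vt j)"
    and ms: "is_multishift d Vt Et lam S"
    and comm: "commuting_tuple (prod_vertices d Vt) d S"
    and adj: "\<forall>j<d. is_adjoint (prod_vertices d Vt) (S j) (Sa j)"
    and inv: "\<forall>j<d. is_inverse (prod_vertices d Vt) (\<lambda>f. Sa j (S j f)) (Inv j)"
begin

abbreviation "VV \<equiv> prod_vertices d Vt"

definition par :: "nat \<Rightarrow> 'a \<Rightarrow> 'a" where "par j a = (THE u. (u, a) \<in> Et j)"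
definition hp :: "nat \<Rightarrow> (nat \<Rightarrow> 'a) \<Rightarrow> bool" where "hp j x \<longleftrightarrow> (\<exists>u. (u, x j) \<in> Et j)"
definition pj :: "nat \<Rightarrow> (nat \<Rightarrow> 'a) \<Rightarrow> (nat \<Rightarrow> 'a)" where "pj j x = x(j := par j (x j))"

lemma tree: "j < d \<Longrightarrow> rooted_directed_tree (Vt j) (Et j)" using trees by blast
lemma leafl: "j < d \<Longrightarrow> leafless (Vt j) (Et j)" using trees by blast

lemma par_eq: assumes "j < d" "(u, a) \<in> Et j" shows "par j a = u"
proof -
  have "\<exists>!u. (u, a) \<in> Et j" using tree[OF assms(1)] assms(2) unfolding rooted_directed_tree_def by blast
  then show ?thesis unfolding par_def using assms(2) by (metis the_equality)
qed

lemma edge_V: assumes "j < d" "(u, a) \<in> Et j" shows "u \<in> Vt j" "a \<in> Vt j"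
  using tree[OF assms(1)] assms(2) unfolding rooted_directed_tree_def by blast+

lemma pj_j: "pj j x j = par j (x j)" by (simp add: pj_def)
lemma pj_k: "k \<noteq> j \<Longrightarrow> pj j x k = x k" by (simp add: pj_def)

lemma par_edge: assumes "j < d" "hp j x" shows "(par j (x j), x j) \<in> Et j"
proof -
  obtain u where u: "(u, x j) \<in> Et j" using assms(2) hp_def by blast
  then show ?thesis using par_eq[OF assms(1) u] by simp
qed

lemma pj_in: assumes "j < d" "x \<in> VV" "hp j x" shows "pj j x \<in> VV"
proof -
  have "par j (x j) \<in> Vt j" using edge_V(1)[OF assms(1) par_edge[OF assms(1,3)]] .
  then show ?thesis using assms(1,2) unfolding prod_vertices_def pj_def
    by (auto simp: PiE_iff extensional_def)
qed

lemma child_iff: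
  assumes j: "j < d" and p: "p \<in> VV"
  shows "x \<in> prod_child d Vt Et j p \<longleftrightarrow> x \<in> VV \<and> hp j x \<and> p = pj j x"
proof
  assume x: "x \<in> prod_child d Vt Et j p"
  then have xV: "x \<in> VV" and e: "(p j, x j) \<in> Et j" and o: "\<forall>k<d. k \<noteq> j \<longrightarrow> x k = p k"
    unfolding prod_child_def by auto
  have h: "hp j x" using e hp_def by blast
  have "p = pj j x"
  proof (rule ext)
    fix k
    show "p k = pj j x k"
    proof (cases "k < d")
      case True
      then show ?thesis using o par_eq[OF j e] by (cases "k = j") (auto simp: pj_def)
    next
      case False
      then have "p k = undefined" "x k = undefined" using p xV unfolding prod_vertices_def
        by (auto simp: PiE_iff extensional_def)
      then show ?thesis using False j by (auto simp: pj_def)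
    qed
  qed
  then show "x \<in> VV \<and> hp j x \<and> p = pj j x" using xV h by blast
next
  assume "x \<in> VV \<and> hp j x \<and> p = pj j x"
  then have xV: "x \<in> VV" and h: "hp j x" and pe: "p = pj j x" by auto
  show "x \<in> prod_child d Vt Et j p"
    unfolding prod_child_def using xV par_edge[OF j h] pe by (auto simp: pj_def)
qed

lemma hp_nonroot: assumes j: "j < d" and x: "x \<in> VV" and h: "hp j x"
  shows "x \<noteq> prod_root d Vt Et"
proof
  assume r: "x = prod_root d Vt Et"
  have "x j = tree_root (Vt j) (Et j)" using r j by (simp add: prod_root_def)
  moreover have "\<not> (\<exists>u. (u, tree_root (Vt j) (Et j)) \<in> Et j)"
  proof -
    have "\<exists>!r. r \<in> Vt j \<and> \<not> (\<exists>u. (u, r) \<in> Et j)"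
      using tree[OF j] unfolding rooted_directed_tree_def by blast
    then have "tree_root (Vt j) (Et j) \<in> Vt j \<and> \<not> (\<exists>u. (u, tree_root (Vt j) (Et j)) \<in> Et j)"
      unfolding tree_root_def by (rule theI')
    then show ?thesis by blast
  qed
  ultimately show False using h hp_def by auto
qed

lemma lam_pos: assumes "j < d" "x \<in> VV" "hp j x" shows "lam j x > 0"
  using ms hp_nonroot[OF assms] assms unfolding is_multishift_def by blast

lemma pj_comm: "i \<noteq> j \<Longrightarrow> pj j (pj i x) = pj i (pj j x)"
  by (auto simp: pj_def fun_upd_twist)

lemma hp_pj: "i \<noteq> j \<Longrightarrow> hp j (pj i x) = hp j x"
  by (simp add: hp_def pj_def)

lemma S_bop: "j < d \<Longrightarrow> bounded_op VV (S j)" using ms unfolding is_multishift_def by blast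
lemma Sa_bop: "j < d \<Longrightarrow> bounded_op VV (Sa j)" using adj unfolding is_adjoint_def by blast
lemma Inv_bop: "j < d \<Longrightarrow> bounded_op VV (Inv j)" using inv unfolding is_inverse_def by blast
lemma adj_eq: "j < d \<Longrightarrow> f \<in> l2space VV \<Longrightarrow> g \<in> l2space VV \<Longrightarrow> l2inner VV (Sa j f) g = l2inner VV f (S j g)"
  using adj unfolding is_adjoint_def by blast

lemma S_basis: assumes "j < d" "v \<in> VV"
  shows "S j (basis_vec v) = (\<lambda>w. if w \<in> VV \<and> hp j w \<and> v = pj j w then complex_of_real (lam j w) else 0)"
proof -
  have "S j (basis_vec v) = (\<lambda>w. if w \<in> prod_child d Vt Et j v then complex_of_real (lam j w) else 0)"
    using ms assms unfolding is_multishift_def by blast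
  then show ?thesis using child_iff[OF assms] by simp
qed

lemma Sa_basis: assumes j: "j < d" and x: "x \<in> VV"
  shows "Sa j (basis_vec x) = (\<lambda>u. if hp j x \<and> u = pj j x then complex_of_real (lam j x) else 0)"
proof (rule ext)
  fix u
  show "Sa j (basis_vec x) u = (if hp j x \<and> u = pj j x then complex_of_real (lam j x) else 0)"
  proof (cases "u \<in> VV")
    case True
    have "Sa j (basis_vec x) u = l2inner VV (basis_vec u) (Sa j (basis_vec x))"
      using l2inner_basis[OF True] by simp
    also have "\<dots> = cnj (l2inner VV (Sa j (basis_vec x)) (basis_vec u))" by (rule l2inner_cnj)
    also have "\<dots> = cnj (l2inner VV (basis_vec x) (S j (basis_vec u)))"
      using adj_eq[OF j basis_in_l2[OF x] basis_in_l2[OF True]] by simp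
    also have "\<dots> = cnj (S j (basis_vec u) x)" using l2inner_basis[OF x] by simp
    also have "\<dots> = (if hp j x \<and> u = pj j x then complex_of_real (lam j x) else 0)"
      using S_basis[OF j True] x by auto
    finally show ?thesis .
  next
    case False
    have "Sa j (basis_vec x) u = 0"
      by (rule l2_out[OF bop_l2[OF Sa_bop[OF j] basis_in_l2[OF x]] False])
    moreover have "\<not> (hp j x \<and> u = pj j x)" using pj_in[OF j x] False by blast
    ultimately show ?thesis by (simp only: if_False)
  qed
qed

lemma S_pt: assumes j: "j < d" and g: "g \<in> l2space VV"
  shows "S j g x = (if x \<in> VV \<and> hp j x then complex_of_real (lam j x) * g (pj j x) else 0)"
proof (cases "x \<in> VV")
  case False
  then show ?thesis using l2_out[OF bop_l2[OF S_bop[OF j] g] False] by simp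
next
  case x: True
  have "S j g x = l2inner VV (basis_vec x) (S j g)" using l2inner_basis[OF x] by simp
  also have "\<dots> = l2inner VV (Sa j (basis_vec x)) g" using adj_eq[OF j basis_in_l2[OF x] g] by simp
  also have "\<dots> = infsum (\<lambda>u. cnj (if hp j x \<and> u = pj j x then complex_of_real (lam j x) else 0) * g u) VV"
    unfolding l2inner_def Sa_basis[OF j x] ..
  also have "\<dots> = (if hp j x then complex_of_real (lam j x) * g (pj j x) else 0)"
  proof (cases "hp j x")
    case True
    show ?thesis
      by (subst infsum_single[OF pj_in[OF j x True]]) (auto simp: True)
  next
    case False
    then show ?thesis by simp
  qed
  finally show ?thesis using x by simp
qed


end



context msetup begin

definition cw :: "nat \<Rightarrow> (nat \<Rightarrow> 'a) \<Rightarrow> real" where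
  "cw j u = infsum (\<lambda>w. (cmod (S j (basis_vec u) w))\<^sup>2) VV"

lemma cw_nonneg: "cw j u \<ge> 0" unfolding cw_def by (simp add: infsum_nonneg)

lemma cw_norm: "cw j u = (l2norm VV (S j (basis_vec u)))\<^sup>2"
  unfolding cw_def l2norm_def by (simp add: infsum_nonneg)

lemma S_l2: "j < d \<Longrightarrow> g \<in> l2space VV \<Longrightarrow> S j g \<in> l2space VV"
  using bop_l2[OF S_bop] .

lemma inner_SS: assumes j: "j < d" and h: "h \<in> l2space VV" and u: "u \<in> VV"
  shows "l2inner VV (S j h) (S j (basis_vec u)) = complex_of_real (cw j u) * cnj (h u)"
proof -
  have t: "cnj (S j h w) * S j (basis_vec u) w = complex_of_real ((cmod (S j (basis_vec u) w))\<^sup>2) * cnj (h u)"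
    for w
  proof (cases "w \<in> VV \<and> hp j w \<and> u = pj j w")
    case True
    then show ?thesis using S_pt[OF j h, of w] S_basis[OF j u]
      by (simp add: power2_eq_square)
  next
    case False
    have "S j (basis_vec u) w = 0" unfolding S_basis[OF j u] using False by (rule if_not_P)
    then show ?thesis by simp
  qed
  have "l2inner VV (S j h) (S j (basis_vec u))
      = infsum (\<lambda>w. complex_of_real ((cmod (S j (basis_vec u) w))\<^sup>2) * cnj (h u)) VV"
    unfolding l2inner_def using t by simp
  also have "\<dots> = infsum (\<lambda>w. complex_of_real ((cmod (S j (basis_vec u) w))\<^sup>2)) VV * cnj (h u)"
    by (rule infsum_cmult_left')
  also have "\<dots> = complex_of_real (cw j u) * cnj (h u)"
    unfolding cw_def infsum_of_real_c ..
  finally show ?thesis .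
qed

lemma SaS: assumes j: "j < d" and h: "h \<in> l2space VV" and u: "u \<in> VV"
  shows "Sa j (S j h) u = complex_of_real (cw j u) * h u"
proof -
  have "Sa j (S j h) u = l2inner VV (basis_vec u) (Sa j (S j h))" using l2inner_basis[OF u] by simp
  also have "\<dots> = cnj (l2inner VV (Sa j (S j h)) (basis_vec u))" by (rule l2inner_cnj)
  also have "\<dots> = cnj (l2inner VV (S j h) (S j (basis_vec u)))"
    using adj_eq[OF j S_l2[OF j h] basis_in_l2[OF u]] by simp
  also have "\<dots> = complex_of_real (cw j u) * h u" using inner_SS[OF j h u] by simp
  finally show ?thesis .
qed

lemma Inv_eq: assumes j: "j < d" and f: "f \<in> l2space VV" and u: "u \<in> VV"
  shows "complex_of_real (cw j u) * Inv j f u = f u"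
proof -
  have "Sa j (S j (Inv j f)) = f" using inv j f unfolding is_inverse_def by blast
  then show ?thesis using SaS[OF j bop_l2[OF Inv_bop[OF j] f] u] by simp
qed

lemma cw_pos: assumes j: "j < d" and u: "u \<in> VV" shows "cw j u > 0"
proof -
  have "complex_of_real (cw j u) * Inv j (basis_vec u) u = 1"
    using Inv_eq[OF j basis_in_l2[OF u] u] by (simp add: basis_vec_def)
  then have "cw j u \<noteq> 0" by auto
  then show ?thesis using cw_nonneg[of j u] by simp
qed

lemma Inv_pt: assumes j: "j < d" and f: "f \<in> l2space VV"
  shows "Inv j f = mlt (\<lambda>v. 1 / cw j v) f"
proof (rule ext)
  fix v show "Inv j f v = mlt (\<lambda>v. 1 / cw j v) f v"
  proof (cases "v \<in> VV")
    case True
    then show ?thesis using Inv_eq[OF j f True] cw_pos[OF j True]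
      by (simp add: mlt_def field_simps)
  next
    case False
    then show ?thesis using l2_out[OF bop_l2[OF Inv_bop[OF j] f] False] l2_out[OF f False]
      by (simp add: mlt_def)
  qed
qed

lemma cw_upper: assumes j: "j < d" shows "\<exists>C\<ge>0. \<forall>u\<in>VV. sqrt (cw j u) \<le> C"
proof -
  obtain C where C: "C \<ge> 0" "\<forall>f\<in>l2space VV. l2norm VV (S j f) \<le> C * l2norm VV f"
    using bop_bound[OF S_bop[OF j]] by blast
  have "sqrt (cw j u) \<le> C" if u: "u \<in> VV" for u
  proof -
    have "sqrt (cw j u) = l2norm VV (S j (basis_vec u))" using cw_norm[of j u] l2norm_nonneg[of VV "S j (basis_vec u)"] by simp
    also have "\<dots> \<le> C" using C(2) basis_in_l2[OF u] l2norm_basis[OF u] by force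
    finally show ?thesis .
  qed
  then show ?thesis using C(1) by blast
qed

lemma cw_lower: assumes j: "j < d" shows "\<exists>K\<ge>0. \<forall>u\<in>VV. 1 / cw j u \<le> K"
proof -
  obtain C where C: "C \<ge> 0" "\<forall>f\<in>l2space VV. l2norm VV (Inv j f) \<le> C * l2norm VV f"
    using bop_bound[OF Inv_bop[OF j]] by blast
  have "1 / cw j u \<le> C" if u: "u \<in> VV" for u
  proof -
    have "Inv j (basis_vec u) u = complex_of_real (1 / cw j u)"
      using Inv_pt[OF j basis_in_l2[OF u]] by (simp add: mlt_def basis_vec_def)
    then have "1 / cw j u = cmod (Inv j (basis_vec u) u)" using cw_pos[OF j u]
      by (simp add: norm_divide)
    also have "\<dots> \<le> l2norm VV (Inv j (basis_vec u))"
      by (rule abs_le_norm[OF bop_l2[OF Inv_bop[OF j] basis_in_l2[OF u]] u])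
    also have "\<dots> \<le> C" using C(2) basis_in_l2[OF u] l2norm_basis[OF u] by force
    finally show ?thesis .
  qed
  then show ?thesis using C(1) by blast
qed

lemma isqrt_bound: assumes j: "j < d" shows "\<exists>K\<ge>0. \<forall>u\<in>VV. \<bar>1 / sqrt (cw j u)\<bar> \<le> K"
proof -
  obtain K where K: "K \<ge> 0" "\<forall>u\<in>VV. 1 / cw j u \<le> K" using cw_lower[OF j] by blast
  have "\<bar>1 / sqrt (cw j u)\<bar> \<le> sqrt K" if u: "u \<in> VV" for u
  proof -
    have "\<bar>1 / sqrt (cw j u)\<bar> = sqrt (1 / cw j u)" using cw_pos[OF j u] by (simp add: real_sqrt_divide)
    also have "\<dots> \<le> sqrt K" using K(2) u real_sqrt_le_mono by blast
    finally show ?thesis .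
  qed
  then show ?thesis using K(1) by (intro exI[of _ "sqrt K"]) simp
qed

lemma sqrt_bound: assumes j: "j < d" shows "\<exists>K\<ge>0. \<forall>u\<in>VV. \<bar>sqrt (cw j u)\<bar> \<le> K"
  using cw_upper[OF j] cw_nonneg by (simp add: abs_of_nonneg)


end



lemma real_cond_iff:
  fixes a b c e :: real
  assumes "a > 0" "b > 0" "c > 0" "e > 0"
  shows "(1 / a * (1 / b) = 1 / c * (1 / e)) \<longleftrightarrow> (1 / sqrt a * (1 / sqrt b) = 1 / sqrt c * (1 / sqrt e))"
proof -
  have l: "(1 / a * (1 / b) = 1 / c * (1 / e)) \<longleftrightarrow> a * b = c * e" using assms by (auto simp: field_simps)
  have r: "(1 / sqrt a * (1 / sqrt b) = 1 / sqrt c * (1 / sqrt e)) \<longleftrightarrow> sqrt (a * b) = sqrt (c * e)"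
    using assms by (auto simp: field_simps real_sqrt_mult)
  show ?thesis unfolding l r by simp
qed

context msetup begin

definition Tm :: "(nat \<Rightarrow> (nat \<Rightarrow> 'a) \<Rightarrow> real) \<Rightarrow> nat \<Rightarrow> ((nat \<Rightarrow> 'a) \<Rightarrow> complex) \<Rightarrow> ((nat \<Rightarrow> 'a) \<Rightarrow> complex)" where
  "Tm m j f = S j (mlt (m j) f)"

definition goodm :: "(nat \<Rightarrow> (nat \<Rightarrow> 'a) \<Rightarrow> real) \<Rightarrow> bool" where
  "goodm m \<longleftrightarrow> (\<forall>j<d. \<forall>f\<in>l2space VV. mlt (m j) f \<in> l2space VV)"

definition condm :: "(nat \<Rightarrow> (nat \<Rightarrow> 'a) \<Rightarrow> real) \<Rightarrow> bool" where
  "condm m \<longleftrightarrow> (\<forall>i<d. \<forall>j<d. i \<noteq> j \<longrightarrow> (\<forall>x\<in>VV. hp i x \<longrightarrow> hp j x \<longrightarrow>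
      m i (pj i x) * m j (pj j (pj i x)) = m j (pj j x) * m i (pj i (pj j x))))"

lemma Tm_l2: "goodm m \<Longrightarrow> j < d \<Longrightarrow> f \<in> l2space VV \<Longrightarrow> Tm m j f \<in> l2space VV"
  unfolding Tm_def goodm_def using S_l2 by blast

lemma Tm_pt: assumes g: "goodm m" and j: "j < d" and f: "f \<in> l2space VV"
  shows "Tm m j f x = (if x \<in> VV \<and> hp j x then complex_of_real (lam j x * m j (pj j x)) * f (pj j x) else 0)"
proof -
  have "mlt (m j) f \<in> l2space VV" using g j f unfolding goodm_def by blast
  then show ?thesis unfolding Tm_def using S_pt[OF j] by (simp add: mlt_def)
qed

lemma TT: assumes g: "goodm m" and i: "i < d" and j: "j < d" and ij: "i \<noteq> j" and f: "f \<in> l2space VV"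
  shows "Tm m i (Tm m j f) x = (if x \<in> VV \<and> hp i x \<and> hp j x then
     complex_of_real (lam i x * m i (pj i x) * (lam j (pj i x) * m j (pj j (pj i x)))) * f (pj j (pj i x)) else 0)"
proof (cases "x \<in> VV \<and> hp i x")
  case True
  then have p: "pj i x \<in> VV" using pj_in[OF i] by blast
  have "Tm m i (Tm m j f) x = complex_of_real (lam i x * m i (pj i x)) * Tm m j f (pj i x)"
    using Tm_pt[OF g i Tm_l2[OF g j f]] True by simp
  also have "Tm m j f (pj i x) = (if hp j x then complex_of_real (lam j (pj i x) * m j (pj j (pj i x))) * f (pj j (pj i x)) else 0)"
    using Tm_pt[OF g j f] p hp_pj[OF ij] by simp
  finally show ?thesis using True by simp
next
  case False
  then show ?thesis using Tm_pt[OF g i Tm_l2[OF g j f]] by auto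
qed

lemma raw: assumes c: "commuting_tuple VV d (Tm m)" and g: "goodm m"
  and i: "i < d" and j: "j < d" and ij: "i \<noteq> j" and x: "x \<in> VV" and hi: "hp i x" and hj: "hp j x"
  shows "lam i x * m i (pj i x) * (lam j (pj i x) * m j (pj j (pj i x)))
       = lam j x * m j (pj j x) * (lam i (pj j x) * m i (pj i (pj j x)))"
proof -
  have p: "pj i x \<in> VV" using pj_in[OF i x hi] .
  have q: "pj j (pj i x) \<in> VV" using pj_in[OF j p] hp_pj[OF ij] hj by simp
  let ?q = "pj j (pj i x)"
  have e: "basis_vec ?q \<in> l2space VV" using basis_in_l2[OF q] .
  let ?A = "lam i x * m i (pj i x) * (lam j (pj i x) * m j (pj j (pj i x)))"
  let ?B = "lam j x * m j (pj j x) * (lam i (pj j x) * m i (pj i (pj j x)))"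
  have "Tm m i (Tm m j (basis_vec ?q)) x = Tm m j (Tm m i (basis_vec ?q)) x"
    using c i j e unfolding commuting_tuple_def by metis
  moreover have "Tm m i (Tm m j (basis_vec ?q)) x = complex_of_real ?A"
    using TT[OF g i j ij e, of x] x hi hj by (simp add: basis_vec_def)
  moreover have "Tm m j (Tm m i (basis_vec ?q)) x = complex_of_real ?B"
    using TT[OF g j i ij[symmetric] e, of x] x hi hj pj_comm[OF ij] by (simp add: basis_vec_def)
  ultimately have "complex_of_real ?A = complex_of_real ?B" by (simp only:)
  then show ?thesis by (simp only: of_real_eq_iff)
qed

lemma mlt_one: "mlt (\<lambda>_. 1) f = f" by (simp add: mlt_def)

lemma lamcond: assumes i: "i < d" and j: "j < d" and ij: "i \<noteq> j" and x: "x \<in> VV" and hi: "hp i x" and hj: "hp j x"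
  shows "lam i x * lam j (pj i x) = lam j x * lam i (pj j x)"
proof -
  have g: "goodm (\<lambda>_ _. 1)" unfolding goodm_def by (simp add: mlt_one)
  have c: "commuting_tuple VV d (Tm (\<lambda>_ _. 1))"
    using comm unfolding commuting_tuple_def Tm_def by (simp add: mlt_one)
  show ?thesis using raw[OF c g i j ij x hi hj] by simp
qed

lemma comm_iff: assumes g: "goodm m"
  shows "commuting_tuple VV d (Tm m) \<longleftrightarrow> condm m"
proof
  assume c: "commuting_tuple VV d (Tm m)"
  show "condm m" unfolding condm_def
  proof (intro allI impI ballI)
    fix i j x assume i: "i < d" and j: "j < d" and ij: "i \<noteq> j" and x: "x \<in> VV" and hi: "hp i x" and hj: "hp j x"
    have p: "pj i x \<in> VV" using pj_in[OF i x hi] .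
    have L: "lam i x * lam j (pj i x) > 0"
      using lam_pos[OF i x hi] lam_pos[OF j p] hp_pj[OF ij] hj by simp
    have r: "lam i x * m i (pj i x) * (lam j (pj i x) * m j (pj j (pj i x)))
       = lam j x * m j (pj j x) * (lam i (pj j x) * m i (pj i (pj j x)))" by (rule raw[OF c g i j ij x hi hj])
    have lc: "lam i x * lam j (pj i x) = lam j x * lam i (pj j x)" by (rule lamcond[OF i j ij x hi hj])
    have "(lam i x * lam j (pj i x)) * (m i (pj i x) * m j (pj j (pj i x)))
        = (lam i x * lam j (pj i x)) * (m j (pj j x) * m i (pj i (pj j x)))"
    proof -
      have "(lam i x * lam j (pj i x)) * (m i (pj i x) * m j (pj j (pj i x)))
          = lam i x * m i (pj i x) * (lam j (pj i x) * m j (pj j (pj i x)))" by (simp only: ac_simps)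
      also have "\<dots> = lam j x * m j (pj j x) * (lam i (pj j x) * m i (pj i (pj j x)))" by (rule r)
      also have "\<dots> = (lam j x * lam i (pj j x)) * (m j (pj j x) * m i (pj i (pj j x)))" by (simp only: ac_simps)
      also have "\<dots> = (lam i x * lam j (pj i x)) * (m j (pj j x) * m i (pj i (pj j x)))" by (simp only: lc)
      finally show ?thesis .
    qed
    then show "m i (pj i x) * m j (pj j (pj i x)) = m j (pj j x) * m i (pj i (pj j x))"
      using L by (metis mult_cancel_left less_irrefl)
  qed
next
  assume cm: "condm m"
  show "commuting_tuple VV d (Tm m)" unfolding commuting_tuple_def
  proof (intro allI impI ballI)
    fix i j f assume i: "i < d" and j: "j < d" and f: "f \<in> l2space VV"
    show "Tm m i (Tm m j f) = Tm m j (Tm m i f)"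
    proof (cases "i = j")
      case True then show ?thesis by simp
    next
      case ij: False
      show ?thesis
      proof (rule ext)
        fix x
        show "Tm m i (Tm m j f) x = Tm m j (Tm m i f) x"
        proof (cases "x \<in> VV \<and> hp i x \<and> hp j x")
          case True
          then have x: "x \<in> VV" and hi: "hp i x" and hj: "hp j x" by auto
          have lc: "lam i x * lam j (pj i x) = lam j x * lam i (pj j x)" by (rule lamcond[OF i j ij x hi hj])
          have mc: "m i (pj i x) * m j (pj j (pj i x)) = m j (pj j x) * m i (pj i (pj j x))"
            using cm i j ij x hi hj unfolding condm_def by blast
          have "lam i x * m i (pj i x) * (lam j (pj i x) * m j (pj j (pj i x)))
             = (lam i x * lam j (pj i x)) * (m i (pj i x) * m j (pj j (pj i x)))" by (simp add: algebra_simps)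
          also have "\<dots> = (lam j x * lam i (pj j x)) * (m j (pj j x) * m i (pj i (pj j x)))" using lc mc by simp
          also have "\<dots> = lam j x * m j (pj j x) * (lam i (pj j x) * m i (pj i (pj j x)))" by (simp add: algebra_simps)
          finally have e: "lam i x * m i (pj i x) * (lam j (pj i x) * m j (pj j (pj i x)))
             = lam j x * m j (pj j x) * (lam i (pj j x) * m i (pj i (pj j x)))" .
          have c2: "x \<in> VV \<and> hp j x \<and> hp i x" using True by blast
          have t1: "Tm m i (Tm m j f) x = complex_of_real (lam i x * m i (pj i x) * (lam j (pj i x) * m j (pj j (pj i x)))) * f (pj j (pj i x))"
            unfolding TT[OF g i j ij f] using True by (rule if_P)
          have t2: "Tm m j (Tm m i f) x = complex_of_real (lam j x * m j (pj j x) * (lam i (pj j x) * m i (pj i (pj j x)))) * f (pj i (pj j x))"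
            unfolding TT[OF g j i ij[symmetric] f] using c2 by (rule if_P)
          show ?thesis unfolding t1 t2 by (subst e) (simp only: pj_comm[OF ij])
        next
          case False
          then show ?thesis using TT[OF g i j ij f, of x] TT[OF g j i ij[symmetric] f, of x] by auto
        qed
      qed
    qed
  qed
qed

definition m1 :: "nat \<Rightarrow> (nat \<Rightarrow> 'a) \<Rightarrow> real" where "m1 j v = 1 / cw j v"
definition m2 :: "nat \<Rightarrow> (nat \<Rightarrow> 'a) \<Rightarrow> real" where "m2 j v = 1 / sqrt (cw j v)"

lemma m1_bound: "j < d \<Longrightarrow> \<exists>K. \<forall>v\<in>VV. \<bar>m1 j v\<bar> \<le> K"
  using cw_lower[of j] cw_nonneg unfolding m1_def by (metis abs_of_nonneg divide_nonneg_nonneg zero_le_one)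

lemma m2_bound: "j < d \<Longrightarrow> \<exists>K. \<forall>v\<in>VV. \<bar>m2 j v\<bar> \<le> K"
  using isqrt_bound[of j] unfolding m2_def by blast

lemma good_bound: assumes "\<And>j. j < d \<Longrightarrow> \<exists>K. \<forall>v\<in>VV. \<bar>m j v\<bar> \<le> K" shows "goodm m"
  unfolding goodm_def
proof (intro allI impI ballI)
  fix j f assume j: "j < d" and f: "f \<in> l2space VV"
  obtain K where K: "\<forall>v\<in>VV. \<bar>m j v\<bar> \<le> K" using assms[OF j] by blast
  show "mlt (m j) f \<in> l2space VV" by (rule mlt_l2(1)[OF f]) (use K in blast)
qed

lemma good1: "goodm m1" by (rule good_bound, rule m1_bound)
lemma good2: "goodm m2" by (rule good_bound, rule m2_bound)

lemma St_eq: "j < d \<Longrightarrow> f \<in> l2space VV \<Longrightarrow> S j (Inv j f) = Tm m1 j f"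
  unfolding Tm_def using Inv_pt by (simp add: m1_def[abs_def])

lemma St_comm_iff: "commuting_tuple VV d (\<lambda>j f. S j (Inv j f)) \<longleftrightarrow> commuting_tuple VV d (Tm m1)"
  unfolding commuting_tuple_def using St_eq Tm_l2[OF good1] by simp

lemma cond12: "condm m1 \<longleftrightarrow> condm m2"
  unfolding condm_def
proof (intro iffI allI impI ballI)
  fix i j x
  assume i: "i < d" and j: "j < d" and ij: "i \<noteq> j" and x: "x \<in> VV" and hi: "hp i x" and hj: "hp j x"
  have p: "pj i x \<in> VV" using pj_in[OF i x hi] .
  have p': "pj j x \<in> VV" using pj_in[OF j x hj] .
  have q: "pj j (pj i x) \<in> VV" using pj_in[OF j p] hp_pj[OF ij] hj by simp
  have q': "pj i (pj j x) \<in> VV" using q pj_comm[OF ij] by simp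
  have eq: "(m1 i (pj i x) * m1 j (pj j (pj i x)) = m1 j (pj j x) * m1 i (pj i (pj j x)))
     \<longleftrightarrow> (m2 i (pj i x) * m2 j (pj j (pj i x)) = m2 j (pj j x) * m2 i (pj i (pj j x)))"
    unfolding m1_def m2_def
    by (rule real_cond_iff) (use cw_pos i j p p' q q' in auto)
  {
    assume "\<forall>i<d. \<forall>j<d. i \<noteq> j \<longrightarrow> (\<forall>x\<in>VV. hp i x \<longrightarrow> hp j x \<longrightarrow>
      m1 i (pj i x) * m1 j (pj j (pj i x)) = m1 j (pj j x) * m1 i (pj i (pj j x)))"
    then show "m2 i (pj i x) * m2 j (pj j (pj i x)) = m2 j (pj j x) * m2 i (pj i (pj j x))"
      using eq i j ij x hi hj by blast
  }
  {
    assume "\<forall>i<d. \<forall>j<d. i \<noteq> j \<longrightarrow> (\<forall>x\<in>VV. hp i x \<longrightarrow> hp j x \<longrightarrow>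
      m2 i (pj i x) * m2 j (pj j (pj i x)) = m2 j (pj j x) * m2 i (pj i (pj j x)))"
    then show "m1 i (pj i x) * m1 j (pj j (pj i x)) = m1 j (pj j x) * m1 i (pj i (pj j x))"
      using eq i j ij x hi hj by blast
  }
qed


end



lemma mlt_inner: "l2inner V (mlt m f) g = l2inner V f (mlt m g)"
  unfolding l2inner_def mlt_def by (simp add: ac_simps)

lemma mlt_pos_inner:
  assumes "\<And>v. v \<in> V \<Longrightarrow> s v \<ge> 0"
  shows "Im (l2inner V f (mlt s f)) = 0 \<and> Re (l2inner V f (mlt s f)) \<ge> 0"
proof -
  have t: "cnj (f v) * (complex_of_real (s v) * f v) = complex_of_real (s v * (cmod (f v))\<^sup>2)" for v
  proof -
    have "cnj (f v) * f v = complex_of_real ((cmod (f v))\<^sup>2)" using complex_norm_square[of "f v"] by (simp add: ac_simps)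
    then show ?thesis by (simp add: ac_simps)
  qed
  have "l2inner V f (mlt s f) = complex_of_real (infsum (\<lambda>v. s v * (cmod (f v))\<^sup>2) V)"
    unfolding l2inner_def mlt_def t infsum_of_real_c ..
  moreover have "infsum (\<lambda>v. s v * (cmod (f v))\<^sup>2) V \<ge> 0"
    by (rule infsum_nonneg) (use assms in simp)
  ultimately show ?thesis by simp
qed

context msetup begin

definition Dc :: "nat \<Rightarrow> ((nat \<Rightarrow> 'a) \<Rightarrow> complex) \<Rightarrow> ((nat \<Rightarrow> 'a) \<Rightarrow> complex)" where
  "Dc j = mlt (\<lambda>v. sqrt (cw j v))"

definition thc :: "nat \<Rightarrow> (nat \<Rightarrow> 'a) \<Rightarrow> real" where
  "thc j w = (if hp j w then lam j w / sqrt (cw j (pj j w)) else 1)"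

lemma mlt_inv1: assumes j: "j < d" and f: "f \<in> l2space VV"
  shows "mlt (m2 j) (Dc j f) = f"
proof (rule ext)
  fix v show "mlt (m2 j) (Dc j f) v = f v"
  proof (cases "v \<in> VV")
    case True then show ?thesis using cw_pos[OF j True]
      by (simp add: mlt_def Dc_def m2_def flip: of_real_mult)
  next
    case False then show ?thesis using l2_out[OF f False] by (simp add: mlt_def Dc_def)
  qed
qed

lemma mlt_inv2: assumes j: "j < d" and f: "f \<in> l2space VV"
  shows "Dc j (mlt (m2 j) f) = f"
proof (rule ext)
  fix v show "Dc j (mlt (m2 j) f) v = f v"
  proof (cases "v \<in> VV")
    case True then show ?thesis using cw_pos[OF j True]
      by (simp add: mlt_def Dc_def m2_def flip: of_real_mult)
  next
    case False then show ?thesis using l2_out[OF f False] by (simp add: mlt_def Dc_def)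
  qed
qed

lemma m2_bop: "j < d \<Longrightarrow> bounded_op VV (mlt (m2 j))"
  using m2_bound[of j] mlt_bop by metis

lemma Dc_bop: "j < d \<Longrightarrow> bounded_op VV (Dc j)"
  unfolding Dc_def using sqrt_bound[of j] mlt_bop by metis

lemma Tm_bop: "j < d \<Longrightarrow> bounded_op VV (Tm m2 j)"
proof -
  assume j: "j < d"
  have "Tm m2 j = (\<lambda>f. S j (mlt (m2 j) f))" by (rule ext) (simp add: Tm_def)
  then show ?thesis using comp_bop[OF S_bop[OF j] m2_bop[OF j]] by simp
qed

lemma forward:
  assumes cm: "condm m2"
  shows "polar_decomp d Vt Et S (Tm m2) thc Dc"
proof -
  have ms1: "is_multishift d Vt Et thc (Tm m2)"
    unfolding is_multishift_def
  proof (intro conjI allI impI ballI)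
    fix j w assume j: "j < d" and w: "w \<in> VV" and nr: "w \<noteq> prod_root d Vt Et"
    show "thc j w > 0"
    proof (cases "hp j w")
      case True
      then show ?thesis using lam_pos[OF j w True] cw_pos[OF j pj_in[OF j w True]]
        by (simp add: thc_def)
    next
      case False then show ?thesis by (simp add: thc_def)
    qed
  next
    fix j assume j: "j < d"
    show "bounded_op VV (Tm m2 j)" by (rule Tm_bop[OF j])
  next
    fix j v assume j: "j < d" and v: "v \<in> VV"
    show "Tm m2 j (basis_vec v) = (\<lambda>w. if w \<in> prod_child d Vt Et j v then complex_of_real (thc j w) else 0)"
    proof (rule ext)
      fix w
      show "Tm m2 j (basis_vec v) w = (if w \<in> prod_child d Vt Et j v then complex_of_real (thc j w) else 0)"
        unfolding Tm_pt[OF good2 j basis_in_l2[OF v]] child_iff[OF j v]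
        by (auto simp: basis_vec_def thc_def m2_def)
    qed
  qed
  have iso: "toral_isometry VV d (Tm m2)"
    unfolding toral_isometry_def
  proof (intro conjI allI impI)
    show "commuting_tuple VV d (Tm m2)" using comm_iff[OF good2] cm by simp
  next
    fix j assume j: "j < d"
    let ?Ua = "\<lambda>f. mlt (m2 j) (Sa j f)"
    have a: "is_adjoint VV (Tm m2 j) ?Ua"
      unfolding is_adjoint_def
    proof (intro conjI ballI)
      show "bounded_op VV ?Ua" by (rule comp_bop[OF m2_bop[OF j] Sa_bop[OF j]])
    next
      fix f g assume f: "f \<in> l2space VV" and g: "g \<in> l2space VV"
      have mg: "mlt (m2 j) g \<in> l2space VV" using good2 j g unfolding goodm_def by blast
      show "l2inner VV (?Ua f) g = l2inner VV f (Tm m2 j g)"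
        unfolding mlt_inner Tm_def by (rule adj_eq[OF j f mg])
    qed
    have b: "\<forall>f\<in>l2space VV. ?Ua (Tm m2 j f) = f"
    proof
      fix f assume f: "f \<in> l2space VV"
      have mf: "mlt (m2 j) f \<in> l2space VV" using good2 j f unfolding goodm_def by blast
      show "?Ua (Tm m2 j f) = f"
      proof (rule ext)
        fix v show "?Ua (Tm m2 j f) v = f v"
        proof (cases "v \<in> VV")
          case True
          have "Sa j (Tm m2 j f) v = complex_of_real (cw j v) * mlt (m2 j) f v"
            unfolding Tm_def by (rule SaS[OF j mf True])
          then have "?Ua (Tm m2 j f) v = complex_of_real (m2 j v * cw j v * m2 j v) * f v"
            by (simp add: mlt_def)
          moreover have "m2 j v * cw j v * m2 j v = 1"
          proof -
            have c: "cw j v > 0" using cw_pos[OF j True] .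
            have "sqrt (cw j v) * sqrt (cw j v) = cw j v" using c by simp
            then show ?thesis unfolding m2_def using c by (simp add: field_simps)
          qed
          ultimately show ?thesis by simp
        next
          case False
          have "Sa j (Tm m2 j f) v = 0"
            by (rule l2_out[OF bop_l2[OF Sa_bop[OF j] Tm_l2[OF good2 j f]] False])
          then show ?thesis using l2_out[OF f False] by (simp add: mlt_def)
        qed
      qed
    qed
    show "\<exists>Ua. is_adjoint VV (Tm m2 j) Ua \<and> (\<forall>f\<in>l2space VV. Ua (Tm m2 j f) = f)"
      using a b by blast
  qed
  have dcomm: "commuting_tuple VV d Dc"
    unfolding commuting_tuple_def Dc_def mlt_def by (simp add: ac_simps)
  have dpi: "diag_pos_inv VV (Dc j)" if j: "j < d" for j
    unfolding diag_pos_inv_def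
  proof (intro conjI)
    show "bounded_op VV (Dc j)" by (rule Dc_bop[OF j])
    show "\<exists>\<delta>. \<forall>v\<in>VV. Dc j (basis_vec v) = (\<lambda>w. \<delta> v * basis_vec v w)"
      by (rule exI[of _ "\<lambda>v. complex_of_real (sqrt (cw j v))"]) (auto simp: Dc_def mlt_def basis_vec_def)
    show "\<forall>f\<in>l2space VV. Im (l2inner VV f (Dc j f)) = 0 \<and> Re (l2inner VV f (Dc j f)) \<ge> 0"
      unfolding Dc_def using mlt_pos_inner[of VV "\<lambda>v. sqrt (cw j v)"] cw_nonneg by simp
    show "\<exists>Di. is_inverse VV (Dc j) Di"
      unfolding is_inverse_def using m2_bop[OF j] mlt_inv1[OF j] mlt_inv2[OF j] by blast
  qed
  have sud: "\<forall>j<d. \<forall>f\<in>l2space VV. S j f = Tm m2 j (Dc j f)"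
    unfolding Tm_def using mlt_inv1 by simp
  show ?thesis unfolding polar_decomp_def using ms1 iso dcomm dpi sud by blast
qed


end



context msetup begin

lemma converse:
  assumes P: "polar_decomp d Vt Et S U th D" and j: "j < d"
  shows "\<forall>f\<in>l2space VV. D j f = Dc j f \<and> U j f = Tm m2 j f"
proof -
  have Ums: "is_multishift d Vt Et th U" and tor: "toral_isometry VV d U"
    and dpi: "diag_pos_inv VV (D j)" and SUD: "\<forall>f\<in>l2space VV. S j f = U j (D j f)"
    using P j unfolding polar_decomp_def by blast+
  have Ub: "bounded_op VV (U j)" using Ums j unfolding is_multishift_def by blast
  obtain Ua where Ua: "is_adjoint VV (U j) Ua" and UaU: "\<forall>f\<in>l2space VV. Ua (U j f) = f"
    using tor j unfolding toral_isometry_def by blast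
  have Dbop: "bounded_op VV (D j)" using dpi unfolding diag_pos_inv_def by blast
  obtain \<delta> where del: "\<forall>v\<in>VV. D j (basis_vec v) = (\<lambda>w. \<delta> v * basis_vec v w)"
    using dpi unfolding diag_pos_inv_def by blast
  have pos: "\<forall>f\<in>l2space VV. Im (l2inner VV f (D j f)) = 0 \<and> Re (l2inner VV f (D j f)) \<ge> 0"
    using dpi unfolding diag_pos_inv_def by blast
  obtain Di where Di: "is_inverse VV (D j) Di" using dpi unfolding diag_pos_inv_def by blast
  have Dib: "bounded_op VV Di" and DDi: "\<forall>g\<in>l2space VV. D j (Di g) = g"
    using Di unfolding is_inverse_def by blast+
  have Ua_eq: "l2inner VV (Ua F) G = l2inner VV F (U j G)" if "F \<in> l2space VV" "G \<in> l2space VV" for F G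
    using Ua that unfolding is_adjoint_def by blast
  have a: "S j (basis_vec v) = (\<lambda>w. \<delta> v * U j (basis_vec v) w)" if v: "v \<in> VV" for v
  proof -
    have "S j (basis_vec v) = U j (D j (basis_vec v))" using SUD basis_in_l2[OF v] by blast
    also have "\<dots> = U j (\<lambda>w. \<delta> v * basis_vec v w)" using del v by simp
    also have "\<dots> = (\<lambda>w. \<delta> v * U j (basis_vec v) w)" by (rule bop_scale[OF Ub basis_in_l2[OF v]])
    finally show ?thesis .
  qed
  have b: "\<delta> v \<noteq> 0" if v: "v \<in> VV" for v
  proof
    assume z: "\<delta> v = 0"
    have "v j \<in> Vt j" using v j unfolding prod_vertices_def by auto
    then obtain c where c: "(v j, c) \<in> Et j" using leafl[OF j] unfolding leafless_def by blast
    let ?w = "v(j := c)"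
    have cV: "c \<in> Vt j" using edge_V(2)[OF j c] .
    have wV: "?w \<in> VV" using v j cV unfolding prod_vertices_def by (auto simp: PiE_iff extensional_def)
    have hw: "hp j ?w" using c by (auto simp: hp_def)
    have pw: "pj j ?w = v" using par_eq[OF j c] by (auto simp: pj_def)
    have "S j (basis_vec v) ?w = complex_of_real (lam j ?w)" using S_basis[OF j v] wV hw pw by simp
    moreover have "S j (basis_vec v) ?w = 0" using a[OF v] z by simp
    ultimately show False using lam_pos[OF j wV hw] by simp
  qed
  have c: "Im (\<delta> v) = 0 \<and> Re (\<delta> v) \<ge> 0" if v: "v \<in> VV" for v
  proof -
    have "l2inner VV (basis_vec v) (D j (basis_vec v)) = \<delta> v"
      using l2inner_basis[OF v] del v by (simp add: basis_vec_def)
    then show ?thesis using pos basis_in_l2[OF v] by metis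
  qed
  have dd: "D j f u = complex_of_real (cw j u) / cnj (\<delta> u) * f u" if f: "f \<in> l2space VV" and u: "u \<in> VV" for f u
  proof -
    have Sf: "S j f \<in> l2space VV" using S_l2[OF j f] .
    have Df: "D j f \<in> l2space VV" using bop_l2[OF Dbop f] .
    have DUa: "D j f = Ua (S j f)" using UaU Df SUD f by simp
    have Ueu: "U j (basis_vec u) = (\<lambda>w. (1 / \<delta> u) * S j (basis_vec u) w)"
      using a[OF u] b[OF u] by (simp add: fun_eq_iff)
    have inner: "l2inner VV (S j f) (\<lambda>w. (1 / \<delta> u) * S j (basis_vec u) w)
        = (1 / \<delta> u) * l2inner VV (S j f) (S j (basis_vec u))"
      unfolding l2inner_def
      by (subst infsum_cmult_right'[symmetric]) (simp add: ac_simps)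
    have "D j f u = l2inner VV (basis_vec u) (Ua (S j f))" using l2inner_basis[OF u] DUa by simp
    also have "\<dots> = cnj (l2inner VV (Ua (S j f)) (basis_vec u))" by (rule l2inner_cnj)
    also have "\<dots> = cnj (l2inner VV (S j f) (U j (basis_vec u)))" using Ua_eq[OF Sf basis_in_l2[OF u]] by simp
    also have "\<dots> = cnj ((1 / \<delta> u) * (complex_of_real (cw j u) * cnj (f u)))"
      unfolding Ueu inner inner_SS[OF j f u] ..
    also have "\<dots> = complex_of_real (cw j u) / cnj (\<delta> u) * f u" by simp
    finally show ?thesis .
  qed
  have e: "\<delta> u = complex_of_real (sqrt (cw j u))" if u: "u \<in> VV" for u
  proof -
    have "D j (basis_vec u) u = \<delta> u" using del u by (simp add: basis_vec_def)
    then have "\<delta> u = complex_of_real (cw j u) / cnj (\<delta> u)" using dd[OF basis_in_l2[OF u] u]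
      by (simp add: basis_vec_def)
    then have "\<delta> u * cnj (\<delta> u) = complex_of_real (cw j u)" using b[OF u] by (simp add: field_simps)
    moreover have "\<delta> u = complex_of_real (Re (\<delta> u))" using c[OF u] by (simp add: complex_eq_iff)
    ultimately have "complex_of_real ((Re (\<delta> u))\<^sup>2) = complex_of_real (cw j u)"
      by (metis complex_cnj_complex_of_real of_real_mult power2_eq_square)
    then have "(Re (\<delta> u))\<^sup>2 = cw j u" by (simp only: of_real_eq_iff)
    then have "Re (\<delta> u) = sqrt (cw j u)" using c[OF u] by (metis real_sqrt_abs abs_of_nonneg)
    then show ?thesis using c[OF u] by (simp add: complex_eq_iff)
  qed
  have Dpt: "D j f = Dc j f" if f: "f \<in> l2space VV" for f
  proof (rule ext)
    fix v show "D j f v = Dc j f v"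
    proof (cases "v \<in> VV")
      case True
      have c0: "cw j v > 0" using cw_pos[OF j True] .
      have "D j f v = complex_of_real (cw j v) / complex_of_real (sqrt (cw j v)) * f v"
        using dd[OF f True] e[OF True] by simp
      also have "complex_of_real (cw j v) / complex_of_real (sqrt (cw j v)) = complex_of_real (sqrt (cw j v))"
      proof -
        have "cw j v / sqrt (cw j v) = sqrt (cw j v)" using c0 by (metis real_div_sqrt less_imp_le)
        then show ?thesis by (metis of_real_divide)
      qed
      finally show ?thesis by (simp add: Dc_def mlt_def)
    next
      case False
      then show ?thesis using l2_out[OF bop_l2[OF Dbop f] False] l2_out[OF f False] by (simp add: Dc_def mlt_def)
    qed
  qed
  have Dipt: "Di g = mlt (m2 j) g" if g: "g \<in> l2space VV" for g
  proof -
    have Dig: "Di g \<in> l2space VV" using bop_l2[OF Dib g] .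
    have "Dc j (Di g) = g" using Dpt[OF Dig] DDi g by simp
    then have "mlt (m2 j) (Dc j (Di g)) = mlt (m2 j) g" by simp
    then show ?thesis using mlt_inv1[OF j Dig] by simp
  qed
  have Upt: "U j g = Tm m2 j g" if g: "g \<in> l2space VV" for g
  proof -
    have Dig: "Di g \<in> l2space VV" using bop_l2[OF Dib g] .
    have "U j g = U j (D j (Di g))" using DDi g by simp
    also have "\<dots> = S j (Di g)" using SUD Dig by simp
    also have "\<dots> = Tm m2 j g" using Dipt[OF g] by (simp add: Tm_def)
    finally show ?thesis .
  qed
  show ?thesis using Dpt Upt by blast
qed


end

theorem mainTheorem16:
  fixes d :: nat
    and Vt :: "nat \<Rightarrow> 'a set" and Et :: "nat \<Rightarrow> ('a \<times> 'a) set"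
    and lam :: "nat \<Rightarrow> (nat \<Rightarrow> 'a) \<Rightarrow> real"
    and S Sa Inv :: "nat \<Rightarrow> ((nat \<Rightarrow> 'a) \<Rightarrow> complex) \<Rightarrow> ((nat \<Rightarrow> 'a) \<Rightarrow> complex)"
  assumes "d \<ge> 1"
    and "\<forall>j<d. rooted_directed_tree (Vt j) (Et j) \<and> leafless (Vt j) (Et j) \<and> countable (Vt j)"
    and "is_multishift d Vt Et lam S"
    and "commuting_tuple (prod_vertices d Vt) d S"
    and "\<forall>j<d. is_adjoint (prod_vertices d Vt) (S j) (Sa j)"
    and "\<forall>j<d. is_inverse (prod_vertices d Vt) (\<lambda>f. Sa j (S j f)) (Inv j)"
  shows "(commuting_tuple (prod_vertices d Vt) d (\<lambda>j f. S j (Inv j f)) \<longleftrightarrow>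
            (\<exists>U \<theta> D. polar_decomp d Vt Et S U \<theta> D))
       \<and> (\<forall>U \<theta> D U' \<theta>' D'. polar_decomp d Vt Et S U \<theta> D \<and> polar_decomp d Vt Et S U' \<theta>' D' \<longrightarrow>
            (\<forall>j<d. \<forall>f\<in>l2space (prod_vertices d Vt). U j f = U' j f \<and> D j f = D' j f))"
proof -
  interpret M: msetup d Vt Et lam S Sa Inv
    using assms(2-6) by unfold_locales
  have A: "commuting_tuple (prod_vertices d Vt) d (\<lambda>j f. S j (Inv j f)) \<longleftrightarrow> M.condm M.m2"
    using M.St_comm_iff M.comm_iff[OF M.good1] M.cond12 by simp
  have B: "M.condm M.m2 \<longleftrightarrow> (\<exists>U \<theta> D. polar_decomp d Vt Et S U \<theta> D)"
  proof
    assume "M.condm M.m2"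
    then show "\<exists>U \<theta> D. polar_decomp d Vt Et S U \<theta> D" using M.forward by blast
  next
    assume "\<exists>U \<theta> D. polar_decomp d Vt Et S U \<theta> D"
    then obtain U th D where P: "polar_decomp d Vt Et S U th D" by blast
    have cU: "commuting_tuple (prod_vertices d Vt) d U"
      using P unfolding polar_decomp_def toral_isometry_def by blast
    have "commuting_tuple (prod_vertices d Vt) d (M.Tm M.m2)"
      unfolding commuting_tuple_def
    proof (intro allI impI ballI)
      fix i j f assume i: "i < d" and j: "j < d" and f: "f \<in> l2space (prod_vertices d Vt)"
      have Tj: "M.Tm M.m2 j f \<in> l2space (prod_vertices d Vt)" using M.Tm_l2[OF M.good2 j f] .
      have Ti: "M.Tm M.m2 i f \<in> l2space (prod_vertices d Vt)" using M.Tm_l2[OF M.good2 i f] .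
      have "M.Tm M.m2 i (M.Tm M.m2 j f) = U i (U j f)"
        using M.converse[OF P i] M.converse[OF P j] f Tj by simp
      also have "\<dots> = U j (U i f)" using cU i j f unfolding commuting_tuple_def by blast
      also have "\<dots> = M.Tm M.m2 j (M.Tm M.m2 i f)"
        using M.converse[OF P i] M.converse[OF P j] f Ti by simp
      finally show "M.Tm M.m2 i (M.Tm M.m2 j f) = M.Tm M.m2 j (M.Tm M.m2 i f)" .
    qed
    then show "M.condm M.m2" using M.comm_iff[OF M.good2] by simp
  qed
  have C: "\<forall>U \<theta> D U' \<theta>' D'. polar_decomp d Vt Et S U \<theta> D \<and> polar_decomp d Vt Et S U' \<theta>' D' \<longrightarrow>
            (\<forall>j<d. \<forall>f\<in>l2space (prod_vertices d Vt). U j f = U' j f \<and> D j f = D' j f)"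
  proof (intro allI impI ballI)
    fix U th D U' th' D' j f
    assume PP: "polar_decomp d Vt Et S U th D \<and> polar_decomp d Vt Et S U' th' D'"
      and j: "j < d" and f: "f \<in> l2space (prod_vertices d Vt)"
    show "U j f = U' j f \<and> D j f = D' j f"
      using M.converse[OF conjunct1[OF PP] j] M.converse[OF conjunct2[OF PP] j] f by simp
  qed
  show ?thesis using A B C by simp
qed

end
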